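(* Let $G$ be a finite solvable group and let $1=H_0 \triangleleft H_1\triangleleft\cdots\triangleleft H_m=G$ be a strictly ascending series of normal subgroups of $G$ such that $H_i=\gamma_{k_i}(H_{i+1})$ with $k_i\in\mathbb{N}\cup\{\infty\}$ for $i\in\{1,\dots,m-1\}$ and $k_0=\infty$. Let $c=\lvert\{i\in\{1,\dots,m-1\}:k_i=\infty\}\rvert$ and $C=\prod_{k_i<\infty}(k_i+1)$, and set $D=c/C^{1/c}$. Then the $n$-input AND function can be computed by a $G$-program of length $O(2^{Dn^{1/c}})$. More precisely, for every $n\in\mathbb{N}$ there exist $1\neq g\in G$ and a $G$-program $Q_n$ over variables $B_1,\dots,B_n$ of length $O(2^{Dn^{1/c}})$ such that for every assignment $\sigma:\{B_1,\dots,B_n\}\to\{0,1\}$, $\sigma(Q_n)=g$ if $\sigma(B_1)=\cdots=\sigma(B_n)=1$ and $\sigma(Q_n)=1$ otherwise.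
   Context: Commutators: $[x,y]=x^{-1}y^{-1}xy$; for subgroups $A,B$, $[A,B]$ is the subgroup generated by all $[a,b]$, and $[A_1,\dots,A_k]=[[A_1,\dots,A_{k-1}],A_k]$. For a group $H$ and $k\in\mathbb{N}$, $\gamma_kH=[H,H,\dots,H]$ with $k+1$ copies of $H$ (so $\gamma_1H=[H,H]$), and $\gamma_\infty H$ (the nilpotent residual) is $\gamma_iH$ for all sufficiently large $i$. An $n$-input $G$-program of length $\ell$ is a sequence $\langle B_{i_1},a_1,b_1\rangle\cdots\langle B_{i_\ell},a_\ell,b_\ell\rangle$ with $B_{i_j}\in\{B_1,\dots,B_n\}$ and $a_j,b_j\in G$; for $\sigma:\{B_1,\dots,B_n\}\to\{0,1\}$, $\sigma(P)=c_1\cdots c_\ell\in G$ where $c_j=a_j$ if $\sigma(B_{i_j})=0$ and $c_j=b_j$ if $\sigma(B_{i_j})=1$. A $G$-program $P$ computes $f:\{0,1\}^n\to\{0,1\}$ if there is $S\subseteq G$ with $\sigma(P)\in S$ iff $f(\sigma)=1$. *)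

theory Defs
  imports Complex_Main "HOL-Algebra.Algebra" "HOL-Library.Extended_Nat"
begin

definition gcomm :: "('a, 'b) monoid_scheme \<Rightarrow> 'a \<Rightarrow> 'a \<Rightarrow> 'a" where
  "gcomm G x y = inv\<^bsub>G\<^esub> x \<otimes>\<^bsub>G\<^esub> inv\<^bsub>G\<^esub> y \<otimes>\<^bsub>G\<^esub> x \<otimes>\<^bsub>G\<^esub> y"

definition comm_subgroup :: "('a, 'b) monoid_scheme \<Rightarrow> 'a set \<Rightarrow> 'a set \<Rightarrow> 'a set" where
  "comm_subgroup G A B = generate G {gcomm G a b | a b. a \<in> A \<and> b \<in> B}"

text \<open>gamma_k H = [H,H,...,H] with k+1 copies of H (so gamma_0 H = H, gamma_1 H = [H,H]).\<close>
fun lcs :: "('a, 'b) monoid_scheme \<Rightarrow> 'a set \<Rightarrow> nat \<Rightarrow> 'a set" where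
  "lcs G H 0 = H"
| "lcs G H (Suc k) = comm_subgroup G (lcs G H k) H"

definition nil_residual :: "('a, 'b) monoid_scheme \<Rightarrow> 'a set \<Rightarrow> 'a set" where
  "nil_residual G H = (THE K. \<exists>N. \<forall>i\<ge>N. lcs G H i = K)"

definition lcs_e :: "('a, 'b) monoid_scheme \<Rightarrow> 'a set \<Rightarrow> enat \<Rightarrow> 'a set" where
  "lcs_e G H k = (case k of enat j \<Rightarrow> lcs G H j | \<infinity> \<Rightarrow> nil_residual G H)"

text \<open>G-programs over variables B_0,...,B_{n-1} (0-based): a list of instructions (i, a, b).\<close>
definition is_program :: "('a, 'b) monoid_scheme \<Rightarrow> nat \<Rightarrow> (nat \<times> 'a \<times> 'a) list \<Rightarrow> bool" where
  "is_program G n P \<longleftrightarrow> (\<forall>(i, a, b) \<in> set P. i < n \<and> a \<in> carrier G \<and> b \<in> carrier G)"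

definition eval_program :: "('a, 'b) monoid_scheme \<Rightarrow> (nat \<Rightarrow> bool) \<Rightarrow> (nat \<times> 'a \<times> 'a) list \<Rightarrow> 'a" where
  "eval_program G \<sigma> P = foldr (\<lambda>(i, a, b) acc. (if \<sigma> i then b else a) \<otimes>\<^bsub>G\<^esub> acc) P \<one>\<^bsub>G\<^esub>"

end

theory Submission
  imports Defs
begin

definition conjcl :: "('a, 'b) monoid_scheme \<Rightarrow> 'a set \<Rightarrow> bool" where
  "conjcl G S \<longleftrightarrow> (\<forall>s\<in>S. \<forall>g\<in>carrier G. inv\<^bsub>G\<^esub> g \<otimes>\<^bsub>G\<^esub> s \<otimes>\<^bsub>G\<^esub> g \<in> S)"

context group begin

lemma gcomm_closed[simp]: "x \<in> carrier G \<Longrightarrow> y \<in> carrier G \<Longrightarrow> gcomm G x y \<in> carrier G"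
  by (simp add: gcomm_def)

lemma canc1[simp]: "x \<in> carrier G \<Longrightarrow> y \<in> carrier G \<Longrightarrow> x \<otimes> (inv x \<otimes> y) = y"
  by (simp add: m_assoc[symmetric])
lemma canc2[simp]: "x \<in> carrier G \<Longrightarrow> y \<in> carrier G \<Longrightarrow> inv x \<otimes> (x \<otimes> y) = y"
  by (simp add: m_assoc[symmetric])

lemma gen_conj_closed:
  assumes S: "S \<subseteq> carrier G" "conjcl G S" and h: "h \<in> generate G S" and x: "x \<in> carrier G"
  shows "inv x \<otimes> h \<otimes> x \<in> generate G S"
  using h
proof (induction h rule: generate.induct)
  case one then show ?case using x by (simp add: generate.one)
next
  case (incl h) then show ?case using S x by (auto simp: conjcl_def intro: generate.incl)
next
  case (inv h)
  have hc: "h \<in> carrier G" using inv S by auto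
  have "inv x \<otimes> inv h \<otimes> x = inv (inv x \<otimes> h \<otimes> x)" using hc x by (simp add: inv_mult_group m_assoc)
  moreover have "inv x \<otimes> h \<otimes> x \<in> S" using inv S x by (auto simp: conjcl_def)
  ultimately show ?case by (simp add: generate.inv)
next
  case (eng h1 h2)
  have c: "h1 \<in> carrier G" "h2 \<in> carrier G" using eng.hyps S generate_incl by auto
  have "inv x \<otimes> (h1 \<otimes> h2) \<otimes> x = (inv x \<otimes> h1 \<otimes> x) \<otimes> (inv x \<otimes> h2 \<otimes> x)"
    using c x by (simp add: m_assoc)
  then show ?case using eng.IH generate.eng by metis
qed

lemma gen_normal:
  assumes S: "S \<subseteq> carrier G" "conjcl G S"
  shows "generate G S \<lhd> G"
proof -
  have "\<forall>x \<in> carrier G. \<forall>h \<in> generate G S. x \<otimes> h \<otimes> inv x \<in> generate G S"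
    using gen_conj_closed[OF S, of _ "inv _"] by (metis inv_closed inv_inv)
  then show ?thesis using normal_inv_iff generate_is_subgroup[OF S(1)] by blast
qed

lemma gcomm_conj:
  assumes "a \<in> carrier G" "b \<in> carrier G" "g \<in> carrier G"
  shows "inv g \<otimes> gcomm G a b \<otimes> g = gcomm G (inv g \<otimes> a \<otimes> g) (inv g \<otimes> b \<otimes> g)"
  using assms by (simp add: gcomm_def inv_mult_group m_assoc)

lemma comm_set_conjcl:
  assumes "Xs \<subseteq> carrier G" "Ys \<subseteq> carrier G" "conjcl G Xs" "conjcl G Ys"
  shows "conjcl G {gcomm G x y | x y. x \<in> Xs \<and> y \<in> Ys}"
  unfolding conjcl_def
proof (intro ballI)
  fix s g assume s: "s \<in> {gcomm G x y | x y. x \<in> Xs \<and> y \<in> Ys}" and g: "g \<in> carrier G"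
  then obtain x y where xy: "s = gcomm G x y" "x \<in> Xs" "y \<in> Ys" by blast
  have "inv g \<otimes> s \<otimes> g = gcomm G (inv g \<otimes> x \<otimes> g) (inv g \<otimes> y \<otimes> g)"
    using xy assms(1,2) g gcomm_conj by blast
  moreover have "inv g \<otimes> x \<otimes> g \<in> Xs" "inv g \<otimes> y \<otimes> g \<in> Ys"
    using assms(3,4) xy g unfolding conjcl_def by auto
  ultimately show "inv g \<otimes> s \<otimes> g \<in> {gcomm G x y | x y. x \<in> Xs \<and> y \<in> Ys}" by blast
qed

lemma comm_id1:
  assumes "x \<in> carrier G" "b1 \<in> carrier G" "b2 \<in> carrier G"
  shows "gcomm G x (b1 \<otimes> b2) = gcomm G x b2 \<otimes> (inv b2 \<otimes> gcomm G x b1 \<otimes> b2)"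
  using assms by (simp add: gcomm_def inv_mult_group m_assoc)

lemma comm_id2:
  assumes "x \<in> carrier G" "y \<in> carrier G"
  shows "gcomm G x (inv y) = y \<otimes> inv (gcomm G x y) \<otimes> inv y"
  using assms by (simp add: gcomm_def inv_mult_group m_assoc)

lemma comm_id3:
  assumes "a1 \<in> carrier G" "a2 \<in> carrier G" "b \<in> carrier G"
  shows "gcomm G (a1 \<otimes> a2) b = (inv a2 \<otimes> gcomm G a1 b \<otimes> a2) \<otimes> gcomm G a2 b"
  using assms by (simp add: gcomm_def inv_mult_group m_assoc)

lemma comm_id4:
  assumes "x \<in> carrier G" "y \<in> carrier G"
  shows "gcomm G (inv x) y = x \<otimes> inv (gcomm G x y) \<otimes> inv x"
  using assms by (simp add: gcomm_def inv_mult_group m_assoc)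


lemma comm_gen:
  assumes XY: "Xs \<subseteq> carrier G" "Ys \<subseteq> carrier G" "conjcl G Xs" "conjcl G Ys"
  shows "comm_subgroup G (generate G Xs) (generate G Ys) \<subseteq> generate G {gcomm G x y | x y. x \<in> Xs \<and> y \<in> Ys}"
proof -
  let ?S = "{gcomm G x y | x y. x \<in> Xs \<and> y \<in> Ys}"
  let ?W = "generate G ?S"
  have Sc: "?S \<subseteq> carrier G" using XY by (auto simp: subset_iff)
  have Wn: "?W \<lhd> G" by (rule gen_normal[OF Sc comm_set_conjcl[OF XY]])
  have Wsub: "subgroup ?W G" using Wn normal_imp_subgroup by blast
  have GX: "generate G Xs \<subseteq> carrier G" "generate G Ys \<subseteq> carrier G"
    using generate_incl XY by auto
  have step1: "gcomm G x b \<in> ?W" if x: "x \<in> Xs" and b: "b \<in> generate G Ys" for x b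
    using b
  proof (induction b rule: generate.induct)
    case one
    have "gcomm G x \<one> = \<one>" using x XY by (auto simp: gcomm_def)
    then show ?case by (simp add: generate.one)
  next
    case (incl h)
    then have "gcomm G x h \<in> ?S" using x by blast
    then show ?case by (rule generate.incl)
  next
    case (inv h)
    have c: "x \<in> carrier G" "h \<in> carrier G" using x inv XY by auto
    have "gcomm G x h \<in> ?S" using x inv by blast
    then have "gcomm G x h \<in> ?W" by (rule generate.incl)
    then have "inv (gcomm G x h) \<in> ?W" by (rule subgroup.m_inv_closed[OF Wsub])
    then have "h \<otimes> inv (gcomm G x h) \<otimes> inv h \<in> ?W"
      using normal.inv_op_closed2[OF Wn] c by simp
    then show ?case using comm_id2[OF c] by simp
  next
    case (eng h1 h2)
    have c: "x \<in> carrier G" "h1 \<in> carrier G" "h2 \<in> carrier G" using x eng.hyps XY GX by auto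
    have "inv h2 \<otimes> gcomm G x h1 \<otimes> h2 \<in> ?W"
      using normal.inv_op_closed1[OF Wn] c eng.IH by simp
    then have "gcomm G x h2 \<otimes> (inv h2 \<otimes> gcomm G x h1 \<otimes> h2) \<in> ?W"
      by (rule subgroup.m_closed[OF Wsub eng.IH(2)])
    then show ?case using comm_id1[OF c] by simp
  qed
  have step2: "gcomm G a b \<in> ?W" if a: "a \<in> generate G Xs" and b: "b \<in> generate G Ys" for a b
    using a
  proof (induction a rule: generate.induct)
    case one
    have "gcomm G \<one> b = \<one>" using b GX by (auto simp: gcomm_def)
    then show ?case by (simp add: generate.one)
  next
    case (incl h) then show ?case using step1 b by simp
  next
    case (inv h)
    have c: "h \<in> carrier G" "b \<in> carrier G" using b inv XY GX by auto
    have "gcomm G h b \<in> ?W" using step1 inv b by simp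
    then have "inv (gcomm G h b) \<in> ?W" by (rule subgroup.m_inv_closed[OF Wsub])
    then have "h \<otimes> inv (gcomm G h b) \<otimes> inv h \<in> ?W"
      using normal.inv_op_closed2[OF Wn] c by simp
    then show ?case using comm_id4[OF c] by simp
  next
    case (eng h1 h2)
    have c: "h1 \<in> carrier G" "h2 \<in> carrier G" "b \<in> carrier G" using b eng.hyps XY GX by auto
    have "inv h2 \<otimes> gcomm G h1 b \<otimes> h2 \<in> ?W"
      using normal.inv_op_closed1[OF Wn] c eng.IH by simp
    then have "(inv h2 \<otimes> gcomm G h1 b \<otimes> h2) \<otimes> gcomm G h2 b \<in> ?W"
      by (rule subgroup.m_closed[OF Wsub _ eng.IH(2)])
    then show ?case using comm_id3[OF c] by simp
  qed
  show ?thesis unfolding comm_subgroup_def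
    by (rule generate_subgroup_incl[OF _ Wsub]) (use step2 in auto)
qed

end


definition prog_ok :: "('a, 'b) monoid_scheme \<Rightarrow> nat set \<Rightarrow> (nat \<times> 'a \<times> 'a) list \<Rightarrow> bool" where
  "prog_ok G S P \<longleftrightarrow> (\<forall>(i, a, b) \<in> set P. i \<in> S \<and> a \<in> carrier G \<and> b \<in> carrier G)"

definition Comp :: "('a, 'b) monoid_scheme \<Rightarrow> nat set \<Rightarrow> real \<Rightarrow> 'a \<Rightarrow> bool" where
  "Comp G S L g \<longleftrightarrow> (\<exists>P. real (length P) \<le> L \<and> prog_ok G S P \<and>
      (\<forall>\<sigma>. eval_program G \<sigma> P = (if \<forall>j\<in>S. \<sigma> j then g else \<one>\<^bsub>G\<^esub>)))"

definition GoodSet :: "('a, 'b) monoid_scheme \<Rightarrow> 'a set \<Rightarrow> nat set \<Rightarrow> real \<Rightarrow> bool" where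
  "GoodSet G A S L \<longleftrightarrow> A \<subseteq> generate G {g \<in> A. Comp G S L g}"

definition pinv :: "('a, 'b) monoid_scheme \<Rightarrow> (nat \<times> 'a \<times> 'a) list \<Rightarrow> (nat \<times> 'a \<times> 'a) list" where
  "pinv G P = rev (map (\<lambda>(i, a, b). (i, inv\<^bsub>G\<^esub> a, inv\<^bsub>G\<^esub> b)) P)"

definition remap :: "(nat \<Rightarrow> nat) \<Rightarrow> (nat \<times> 'a \<times> 'a) list \<Rightarrow> (nat \<times> 'a \<times> 'a) list" where
  "remap f P = map (\<lambda>(i, a, b). (f i, a, b)) P"

lemma eval_Nil[simp]: "eval_program G \<sigma> [] = \<one>\<^bsub>G\<^esub>"
  by (simp add: eval_program_def)

lemma eval_Cons[simp]: "eval_program G \<sigma> ((i, a, b) # P) = (if \<sigma> i then b else a) \<otimes>\<^bsub>G\<^esub> eval_program G \<sigma> P"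
  by (simp add: eval_program_def)

lemma prog_ok_Cons[simp]: "prog_ok G S ((i, a, b) # P) \<longleftrightarrow> i \<in> S \<and> a \<in> carrier G \<and> b \<in> carrier G \<and> prog_ok G S P"
  by (simp add: prog_ok_def)

lemma prog_ok_Nil[simp]: "prog_ok G S []"
  by (simp add: prog_ok_def)

lemma prog_ok_append[simp]: "prog_ok G S (P @ Q) \<longleftrightarrow> prog_ok G S P \<and> prog_ok G S Q"
  unfolding prog_ok_def by (simp add: ball_Un)

lemma prog_ok_mono: "prog_ok G S P \<Longrightarrow> S \<subseteq> T \<Longrightarrow> prog_ok G T P"
  by (auto simp add: prog_ok_def)

context group begin

lemma eval_closed: "prog_ok G S P \<Longrightarrow> eval_program G \<sigma> P \<in> carrier G"
  by (induction P) (auto)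

lemma eval_append: "prog_ok G S P \<Longrightarrow> prog_ok G S Q \<Longrightarrow>
   eval_program G \<sigma> (P @ Q) = eval_program G \<sigma> P \<otimes> eval_program G \<sigma> Q"
proof (induction P)
  case Nil then show ?case using eval_closed by simp
next
  case (Cons x P)
  obtain i a b where x: "x = (i, a, b)" by (cases x) auto
  show ?case using Cons x eval_closed[of S P \<sigma>] eval_closed[of S Q \<sigma>] by (simp add: m_assoc)
qed

lemma pinv_ok: "prog_ok G S P \<Longrightarrow> prog_ok G S (pinv G P)"
  by (auto simp: prog_ok_def pinv_def)

lemma pinv_length[simp]: "length (pinv G P) = length P"
  by (simp add: pinv_def)

lemma pinv_eval: "prog_ok G S P \<Longrightarrow> eval_program G \<sigma> (pinv G P) = inv (eval_program G \<sigma> P)"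
proof (induction P)
  case Nil then show ?case by (simp add: pinv_def)
next
  case (Cons x P)
  obtain i a b where x: "x = (i, a, b)" by (cases x) auto
  have ok: "prog_ok G S (pinv G P)" "prog_ok G S [(i, inv a, inv b)]" using Cons x pinv_ok by auto
  have "pinv G (x # P) = pinv G P @ [(i, inv a, inv b)]" using x by (simp add: pinv_def)
  then have "eval_program G \<sigma> (pinv G (x # P)) = inv (eval_program G \<sigma> P) \<otimes> (if \<sigma> i then inv b else inv a)"
    using eval_append[OF ok] Cons x by simp
  then show ?case using Cons x eval_closed[of S P \<sigma>] by (simp add: inv_mult_group)
qed

lemma remap_eval: "eval_program G \<sigma> (remap f P) = eval_program G (\<sigma> \<circ> f) P"
  by (induction P) (auto simp: remap_def)

lemma remap_ok: "prog_ok G S P \<Longrightarrow> prog_ok G (f ` S) (remap f P)"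
  by (auto simp: prog_ok_def remap_def)

lemma Comp_carrier: "Comp G S L g \<Longrightarrow> g \<in> carrier G"
proof -
  assume "Comp G S L g"
  then obtain P where P: "prog_ok G S P" "\<And>\<sigma>. eval_program G \<sigma> P = (if \<forall>j\<in>S. \<sigma> j then g else \<one>)"
    unfolding Comp_def by blast
  have "eval_program G (\<lambda>_. True) P = g" using P(2) by simp
  then show ?thesis using eval_closed[OF P(1)] by metis
qed

lemma Comp_mono: "Comp G S L g \<Longrightarrow> L \<le> L' \<Longrightarrow> Comp G S L' g"
  unfolding Comp_def by force

lemma Comp_remap: assumes "Comp G S L g" "f ` S = S'" shows "Comp G S' L g"
proof -
  obtain P where P: "real (length P) \<le> L" "prog_ok G S P"
     "\<And>\<sigma>. eval_program G \<sigma> P = (if \<forall>j\<in>S. \<sigma> j then g else \<one>)"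
    using assms(1) unfolding Comp_def by blast
  have "eval_program G \<sigma> (remap f P) = (if \<forall>j\<in>S'. \<sigma> j then g else \<one>)" for \<sigma>
    using P(3)[of "\<sigma> \<circ> f"] assms(2) by (auto simp: remap_eval)
  moreover have "length (remap f P) = length P" by (simp add: remap_def)
  ultimately show ?thesis unfolding Comp_def using P remap_ok assms(2) by metis
qed

lemma Comp_base: "g \<in> carrier G \<Longrightarrow> Comp G {i} 1 g"
  unfolding Comp_def by (rule exI[of _ "[(i, \<one>, g)]"]) auto

lemma Comp_comm:
  assumes "Comp G S1 L1 g" "Comp G S2 L2 h"
  shows "Comp G (S1 \<union> S2) (2 * (L1 + L2)) (gcomm G g h)"
proof -
  obtain P where P: "real (length P) \<le> L1" "prog_ok G S1 P"
     "\<And>\<sigma>. eval_program G \<sigma> P = (if \<forall>j\<in>S1. \<sigma> j then g else \<one>)"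
    using assms(1) unfolding Comp_def by blast
  obtain R where R: "real (length R) \<le> L2" "prog_ok G S2 R"
     "\<And>\<sigma>. eval_program G \<sigma> R = (if \<forall>j\<in>S2. \<sigma> j then h else \<one>)"
    using assms(2) unfolding Comp_def by blast
  have gh: "g \<in> carrier G" "h \<in> carrier G" using assms Comp_carrier by auto
  let ?S = "S1 \<union> S2"
  have okP: "prog_ok G ?S P" and okR: "prog_ok G ?S R" using P(2) R(2) prog_ok_mono by blast+
  let ?Q = "pinv G P @ pinv G R @ P @ R"
  have okQ: "prog_ok G ?S ?Q" using okP okR pinv_ok by simp
  have ev: "eval_program G \<sigma> ?Q = inv (eval_program G \<sigma> P) \<otimes> (inv (eval_program G \<sigma> R) \<otimes>
            (eval_program G \<sigma> P \<otimes> eval_program G \<sigma> R))" for \<sigma>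
    using okP okR pinv_ok[OF okP] pinv_ok[OF okR]
    by (simp add: eval_append[of ?S] pinv_eval[OF okP] pinv_eval[OF okR])
  have "eval_program G \<sigma> ?Q = (if \<forall>j\<in>?S. \<sigma> j then gcomm G g h else \<one>)" for \<sigma>
    using gh unfolding ev P(3) R(3) by (auto simp: gcomm_def m_assoc)
  moreover have "real (length ?Q) \<le> 2 * (L1 + L2)" using P(1) R(1) by simp
  ultimately show ?thesis unfolding Comp_def using okQ by blast
qed

lemma lmul_prog:
  assumes "prog_ok G S P" "P \<noteq> []" "y \<in> carrier G"
  shows "\<exists>P'. length P' = length P \<and> prog_ok G S P' \<and> P' \<noteq> [] \<and>
           (\<forall>\<sigma>. eval_program G \<sigma> P' = y \<otimes> eval_program G \<sigma> P)"
proof -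
  obtain i a b Q where P: "P = (i, a, b) # Q" using assms(2) by (metis list.exhaust prod_cases3)
  show ?thesis
    by (rule exI[of _ "(i, y \<otimes> a, y \<otimes> b) # Q"])
       (use assms P eval_closed[of S Q] in \<open>auto simp: m_assoc\<close>)
qed

lemma rmul_prog:
  assumes "prog_ok G S P" "P \<noteq> []" "y \<in> carrier G"
  shows "\<exists>P'. length P' = length P \<and> prog_ok G S P' \<and> P' \<noteq> [] \<and>
           (\<forall>\<sigma>. eval_program G \<sigma> P' = eval_program G \<sigma> P \<otimes> y)"
proof -
  obtain i a b Q where P: "P = Q @ [(i, a, b)]" using assms(2) by (metis rev_exhaust prod_cases3)
  have okQ: "prog_ok G S Q" and abi: "i \<in> S" "a \<in> carrier G" "b \<in> carrier G" using assms P by auto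
  have e1: "eval_program G \<sigma> P = eval_program G \<sigma> Q \<otimes> (if \<sigma> i then b else a)" for \<sigma>
    using eval_append[OF okQ, of "[(i, a, b)]"] abi P by simp
  have e2: "eval_program G \<sigma> (Q @ [(i, a \<otimes> y, b \<otimes> y)]) = eval_program G \<sigma> Q \<otimes> (if \<sigma> i then b \<otimes> y else a \<otimes> y)" for \<sigma>
    using eval_append[OF okQ, of "[(i, a \<otimes> y, b \<otimes> y)]"] abi assms(3) by simp
  show ?thesis
    by (rule exI[of _ "Q @ [(i, a \<otimes> y, b \<otimes> y)]"])
       (use assms P abi okQ e1 e2 eval_closed[of S Q] in \<open>auto simp: m_assoc\<close>)
qed

lemma Comp_conj:
  assumes "Comp G S L g" "x \<in> carrier G"
  shows "Comp G S L (inv x \<otimes> g \<otimes> x)"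
proof -
  obtain P where P: "real (length P) \<le> L" "prog_ok G S P"
     "\<And>\<sigma>. eval_program G \<sigma> P = (if \<forall>j\<in>S. \<sigma> j then g else \<one>)"
    using assms(1) unfolding Comp_def by blast
  have g: "g \<in> carrier G" using assms Comp_carrier by auto
  show ?thesis
  proof (cases "P = []")
    case True
    then have "g = \<one>" using P(3)[of "\<lambda>_. True"] by simp
    then show ?thesis using assms(1) assms(2) by simp
  next
    case False
    obtain P1 where P1: "length P1 = length P" "prog_ok G S P1" "P1 \<noteq> []"
      "\<And>\<sigma>. eval_program G \<sigma> P1 = inv x \<otimes> eval_program G \<sigma> P"
      using lmul_prog[OF P(2) False, of "inv x"] assms(2) by auto
    obtain P2 where P2: "length P2 = length P1" "prog_ok G S P2"
      "\<And>\<sigma>. eval_program G \<sigma> P2 = eval_program G \<sigma> P1 \<otimes> x"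
      using rmul_prog[OF P1(2) P1(3) assms(2)] by auto
    have "eval_program G \<sigma> P2 = (if \<forall>j\<in>S. \<sigma> j then inv x \<otimes> g \<otimes> x else \<one>)" for \<sigma>
      unfolding P2(3) P1(4) P(3) using g assms(2) by auto
    then show ?thesis unfolding Comp_def using P(1) P1(1) P2(1,2) by (intro exI[of _ P2]) auto
  qed
qed

end


context group begin

lemma normal_conjcl: "A \<lhd> G \<Longrightarrow> conjcl G A"
  unfolding conjcl_def by (intro ballI) (rule normal.inv_op_closed1)

lemma normal_sub: "A \<lhd> G \<Longrightarrow> A \<subseteq> carrier G"
  by (rule subgroup.subset[OF normal_imp_subgroup])

lemma comm_normal: assumes "A \<lhd> G" "B \<lhd> G" shows "comm_subgroup G A B \<lhd> G"
  unfolding comm_subgroup_def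
proof (rule gen_normal)
  show "{gcomm G a b |a b. a \<in> A \<and> b \<in> B} \<subseteq> carrier G"
    using normal_sub[OF assms(1)] normal_sub[OF assms(2)] by (auto simp: subset_iff)
  show "conjcl G {gcomm G a b |a b. a \<in> A \<and> b \<in> B}"
    by (rule comm_set_conjcl) (use assms normal_sub normal_conjcl in auto)
qed

lemma comm_sub: assumes "A \<lhd> G" "B \<subseteq> carrier G" shows "comm_subgroup G A B \<subseteq> A"
  unfolding comm_subgroup_def
proof (rule generate_subgroup_incl)
  show sA: "subgroup A G" using assms(1) by (rule normal_imp_subgroup)
  show "{gcomm G a b |a b. a \<in> A \<and> b \<in> B} \<subseteq> A"
  proof
    fix x assume "x \<in> {gcomm G a b |a b. a \<in> A \<and> b \<in> B}"
    then obtain a b where ab: "x = gcomm G a b" "a \<in> A" "b \<in> B" by blast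
    have c: "a \<in> carrier G" "b \<in> carrier G" using ab assms normal_sub by auto
    have "inv b \<otimes> a \<otimes> b \<in> A" using normal.inv_op_closed1[OF assms(1)] c ab by blast
    moreover have "inv a \<in> A" using ab subgroup.m_inv_closed[OF sA] by blast
    ultimately have "inv a \<otimes> (inv b \<otimes> a \<otimes> b) \<in> A"
      using subgroup.m_closed[OF sA] by blast
    then show "x \<in> A" using ab c by (simp add: gcomm_def m_assoc)
  qed
qed

lemma lcs_normal: "B \<lhd> G \<Longrightarrow> lcs G B j \<lhd> G"
  by (induction j) (auto intro: comm_normal)

lemma lcs_decr: "B \<lhd> G \<Longrightarrow> lcs G B (Suc j) \<subseteq> lcs G B j"
  using comm_sub[OF lcs_normal] normal_sub by simp

lemma lcs_stab:
  assumes fin: "finite (carrier G)" and B: "B \<lhd> G"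
  shows "\<exists>N. \<forall>j\<ge>N. lcs G B j = lcs G B N"
proof -
  let ?f = "\<lambda>j. card (lcs G B j)"
  obtain N where N: "\<And>j. ?f N \<le> ?f j"
    using ex_has_least_nat[of "\<lambda>_. True" 0 ?f] by blast
  have "lcs G B j = lcs G B N" if "j \<ge> N" for j
  proof -
    have sub: "lcs G B j \<subseteq> lcs G B N"
      using lift_Suc_antimono_le[of "lcs G B", OF lcs_decr[OF B] that] .
    have fN: "finite (lcs G B N)"
      using finite_subset[OF normal_sub[OF lcs_normal[OF B]] fin] .
    have "card (lcs G B j) \<le> card (lcs G B N)" by (rule card_mono[OF fN sub])
    with N[of j] have "card (lcs G B j) = card (lcs G B N)" by linarith
    then show ?thesis by (rule card_subset_eq[OF fN sub])
  qed
  then show ?thesis by blast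
qed

lemma nil_res_fix:
  assumes fin: "finite (carrier G)" and B: "B \<lhd> G"
  shows "nil_residual G B = comm_subgroup G (nil_residual G B) B"
proof -
  obtain N where N: "\<And>j. j \<ge> N \<Longrightarrow> lcs G B j = lcs G B N" using lcs_stab[OF assms] by blast
  have "nil_residual G B = lcs G B N"
    unfolding nil_residual_def
  proof (rule the_equality)
    show "\<exists>N'. \<forall>i\<ge>N'. lcs G B i = lcs G B N" using N by blast
    fix K assume "\<exists>N'. \<forall>i\<ge>N'. lcs G B i = K"
    then obtain N' where N': "\<forall>i\<ge>N'. lcs G B i = K" by blast
    have "K = lcs G B (max N N')" using N'[rule_format, of "max N N'"] by (metis max.cobounded2)
    also have "\<dots> = lcs G B N" using N[of "max N N'"] by (metis max.cobounded1)
    finally show "K = lcs G B N" .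
  qed
  moreover have "comm_subgroup G (lcs G B N) B = lcs G B N"
  proof -
    have "lcs G B (Suc N) = lcs G B N" using N[of "Suc N"] by (meson le_SucI order_refl)
    then show ?thesis by (simp only: lcs.simps)
  qed
  ultimately show ?thesis by (simp only:)
qed

lemma GoodSet_comm:
  assumes A: "A \<lhd> G" and B: "B \<lhd> G" and gA: "GoodSet G A S1 L1" and gB: "GoodSet G B S2 L2"
  shows "GoodSet G (comm_subgroup G A B) (S1 \<union> S2) (2 * (L1 + L2))"
proof -
  let ?X = "{g \<in> A. Comp G S1 L1 g}" and ?Y = "{g \<in> B. Comp G S2 L2 g}"
  have Xc: "?X \<subseteq> carrier G" "?Y \<subseteq> carrier G" using normal_sub A B by auto
  have cX: "conjcl G ?X" "conjcl G ?Y"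
    using normal_conjcl[OF A] normal_conjcl[OF B] Comp_conj unfolding conjcl_def by auto
  have gX: "generate G ?X = A"
    using gA generate_subgroup_incl[of ?X A, OF _ normal_imp_subgroup[OF A]] unfolding GoodSet_def by blast
  have gY: "generate G ?Y = B"
    using gB generate_subgroup_incl[of ?Y B, OF _ normal_imp_subgroup[OF B]] unfolding GoodSet_def by blast
  have "comm_subgroup G A B \<subseteq> generate G {gcomm G x y | x y. x \<in> ?X \<and> y \<in> ?Y}"
    using comm_gen[OF Xc cX] unfolding gX gY .
  also have "\<dots> \<subseteq> generate G {g \<in> comm_subgroup G A B. Comp G (S1 \<union> S2) (2 * (L1 + L2)) g}"
  proof (rule mono_generate, safe)
    fix x y assume "x \<in> A" "Comp G S1 L1 x" "y \<in> B" "Comp G S2 L2 y"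
    then show "gcomm G x y \<in> comm_subgroup G A B"
      unfolding comm_subgroup_def by (blast intro: generate.incl)
    show "Comp G (S1 \<union> S2) (2 * (L1 + L2)) (gcomm G x y)"
      by (rule Comp_comm) fact+
  qed
  finally show ?thesis unfolding GoodSet_def .
qed

lemma GoodSet_remap: "GoodSet G A S L \<Longrightarrow> f ` S = S' \<Longrightarrow> GoodSet G A S' L"
  unfolding GoodSet_def using mono_generate[of "{g \<in> A. Comp G S L g}" "{g \<in> A. Comp G S' L g}"] Comp_remap
  by blast

lemma GoodSet_mono: "GoodSet G A S L \<Longrightarrow> L \<le> L' \<Longrightarrow> GoodSet G A S L'"
  unfolding GoodSet_def using mono_generate[of "{g \<in> A. Comp G S L g}" "{g \<in> A. Comp G S L' g}"] Comp_mono
  by blast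

lemma GoodSet_base: "A \<subseteq> carrier G \<Longrightarrow> GoodSet G A {i} 1"
  unfolding GoodSet_def using Comp_base by (auto intro: generate.incl)

lemma GoodSet_shift: "GoodSet G A {..<t} L \<Longrightarrow> GoodSet G A {c..<c + t} L"
  by (erule GoodSet_remap[where f = "\<lambda>j. j + c"]) (simp add: lessThan_atLeast0 add.commute)

lemma GoodSet_shrink:
  assumes "GoodSet G A {..<t} L" "1 \<le> s" "s \<le> t"
  shows "GoodSet G A {..<s} L"
proof (rule GoodSet_remap[OF assms(1), where f = "\<lambda>j. min j (s - 1)"])
  show "(\<lambda>j. min j (s - 1)) ` {..<t} = {..<s}"
  proof
    show "(\<lambda>j. min j (s - 1)) ` {..<t} \<subseteq> {..<s}" using assms by auto
    show "{..<s} \<subseteq> (\<lambda>j. min j (s - 1)) ` {..<t}"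
    proof
      fix x assume "x \<in> {..<s}"
      then have "x = min x (s - 1)" "x \<in> {..<t}" using assms by auto
      then show "x \<in> (\<lambda>j. min j (s - 1)) ` {..<t}" by blast
    qed
  qed
qed

lemma GoodSet_lcs:
  assumes B: "B \<lhd> G" and gB: "GoodSet G B {..<t} L" and L: "L \<ge> 0"
  shows "GoodSet G (lcs G B k) {..<(k + 1) * t} (4 ^ k * L)"
proof (induction k)
  case 0 then show ?case using gB by simp
next
  case (Suc k)
  have g2: "GoodSet G B {(k + 1) * t..<(k + 1) * t + t} L" using GoodSet_shift[OF gB] .
  have "GoodSet G (comm_subgroup G (lcs G B k) B) ({..<(k + 1) * t} \<union> {(k + 1) * t..<(k + 1) * t + t})
           (2 * (4 ^ k * L + L))"
    by (rule GoodSet_comm[OF lcs_normal[OF B] B Suc g2])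
  moreover have "{..<(k + 1) * t} \<union> {(k + 1) * t..<(k + 1) * t + t} = {..<(Suc k + 1) * t}" by auto
  moreover have "2 * (4 ^ k * L + L) \<le> 4 ^ Suc k * L"
  proof -
    have "L \<le> 4 ^ k * L" using L by (simp add: mult_le_cancel_right1)
    then show ?thesis by (simp add: mult.commute)
  qed
  ultimately show ?case using GoodSet_mono by auto
qed

lemma GoodSet_inf:
  assumes A: "A \<lhd> G" and B: "B \<lhd> G" and hfix: "comm_subgroup G A B = A"
    and gB: "GoodSet G B {..<t} Lb"
  shows "GoodSet G A {..<1 + r * t} (2 ^ r * (1 + 2 * Lb) - 2 * Lb)"
proof (induction r)
  case 0 then show ?case using GoodSet_base[OF normal_sub[OF A], of 0] by (simp add: lessThan_Suc)
next
  case (Suc r)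
  have g2: "GoodSet G B {1 + r * t..<1 + r * t + t} Lb" using GoodSet_shift[OF gB] .
  have "GoodSet G (comm_subgroup G A B) ({..<1 + r * t} \<union> {1 + r * t..<1 + r * t + t})
           (2 * ((2 ^ r * (1 + 2 * Lb) - 2 * Lb) + Lb))"
    by (rule GoodSet_comm[OF A B Suc g2])
  moreover have "{..<1 + r * t} \<union> {1 + r * t..<1 + r * t + t} = {..<1 + Suc r * t}" by auto
  moreover have "2 * ((2 ^ r * (1 + 2 * Lb) - 2 * Lb) + Lb) = 2 ^ Suc r * (1 + 2 * Lb) - 2 * Lb"
    by (simp add: algebra_simps)
  ultimately show ?case using hfix by (simp add: mult.assoc)
qed

lemma GoodSet_nontriv:
  assumes "GoodSet G A S L" "A \<noteq> {\<one>}" "subgroup A G"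
  shows "\<exists>g \<in> A. g \<noteq> \<one> \<and> Comp G S L g"
proof (rule ccontr)
  assume "\<not> ?thesis"
  then have "{g \<in> A. Comp G S L g} \<subseteq> {\<one>}" by auto
  then have "generate G {g \<in> A. Comp G S L g} \<subseteq> {\<one>}"
    using generate_subgroup_incl triv_subgroup by blast
  then have "A \<subseteq> {\<one>}" using assms(1) unfolding GoodSet_def by blast
  moreover have "\<one> \<in> A" using assms(3) subgroup.one_closed by blast
  ultimately show False using assms(2) by blast
qed

end


lemma powr_subadd1:
  fixes x p :: real
  assumes x: "x \<ge> 0" and p: "0 < p" "p \<le> 1"
  shows "(x + 1) powr p \<le> x powr p + 1"
proof -
  define y where "y = x + 1"
  have y: "y > 0" "y \<ge> 1" using x by (auto simp: y_def)
  have a: "x / y \<le> (x / y) powr p"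
    using powr_mono'[of p 1 "x / y"] p x y by (simp add: y_def)
  have b: "1 / y \<le> (1 / y) powr p"
    using powr_mono'[of p 1 "1 / y"] p x y by (simp add: y_def)
  have "1 = x / y + 1 / y" using y by (simp add: y_def field_simps)
  also have "\<dots> \<le> (x / y) powr p + (1 / y) powr p" using a b by simp
  also have "\<dots> = (x powr p + 1) / y powr p" by (simp add: powr_divide add_divide_distrib)
  finally have "1 \<le> (x powr p + 1) / y powr p" .
  then show ?thesis using y by (simp add: y_def field_simps)
qed

lemma powr_sub_le:
  fixes t x p :: real
  assumes "0 \<le> x" "0 \<le> t" "t \<le> x + 1" "0 < p" "p \<le> 1"
  shows "t powr p \<le> x powr p + 1"
  using powr_mono2[of p t "x + 1"] powr_subadd1[of x p] assms by linarith

lemma Rb: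
  fixes C' :: real and c kk n t :: nat
  assumes c: "c \<ge> 1" and C: "C' \<ge> 1" and t: "real t \<le> real n / real (kk + 1) + 1"
  shows "(real c / C' powr (1 / real c)) * real t powr (1 / real c)
         \<le> (real c / (C' * real (kk + 1)) powr (1 / real c)) * real n powr (1 / real c)
            + real c / C' powr (1 / real c)"
proof -
  let ?p = "1 / real c"
  have p: "0 < ?p" "?p \<le> 1" using c by auto
  have "real t powr ?p \<le> (real n / real (kk + 1)) powr ?p + 1"
    by (rule powr_sub_le) (use t p in auto)
  moreover have D'0: "real c / C' powr ?p \<ge> 0" using C by auto
  ultimately have "(real c / C' powr ?p) * real t powr ?p
      \<le> (real c / C' powr ?p) * ((real n / real (kk + 1)) powr ?p + 1)"
    by (rule mult_left_mono)
  also have "\<dots> = (real c / (C' * real (kk + 1)) powr ?p) * real n powr ?p + real c / C' powr ?p"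
  proof -
    have e: "(C' * real (kk + 1)) powr ?p = C' powr ?p * real (kk + 1) powr ?p"
      using C by (simp add: powr_mult)
    have pos: "C' powr ?p > 0" "real (kk + 1) powr ?p > 0" using C by auto
    show ?thesis unfolding e powr_divide using pos by (simp add: field_simps)
  qed
  finally show ?thesis .
qed

lemma Rc:
  fixes C n :: nat
  assumes "C \<ge> 1"
  shows "(2::real) powr real (n div C + 1) \<le> 2 * 2 powr (real n / real C)"
proof -
  have "n div C * C \<le> n" by (rule div_times_less_eq_dividend)
  then have "real (n div C) * real C \<le> real n" by (metis of_nat_le_iff of_nat_mult)
  then have "real (n div C) \<le> real n / real C" using assms by (simp add: field_simps)
  then have "(2::real) powr real (n div C + 1) \<le> 2 powr (real n / real C + 1)"
    by (intro powr_mono) auto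
  also have "\<dots> = 2 * 2 powr (real n / real C)" by (simp add: powr_add)
  finally show ?thesis .
qed

lemma Rd:
  fixes C n :: real and c' t r :: nat
  assumes c: "c' \<ge> 1" and C: "C \<ge> 1" and n: "n \<ge> 1"
    and s_def: "s = (n / C) powr (1 / real (c' + 1))"
    and t1: "C * s ^ c' \<le> real t" and t2: "real t \<le> C * s ^ c' + 1"
    and r: "real r \<le> n / real t + 1"
  shows "real r + (real c' / C powr (1 / real c')) * real t powr (1 / real c')
     \<le> (real (c' + 1) / C powr (1 / real (c' + 1))) * n powr (1 / real (c' + 1)) + 1 + real c' / C powr (1 / real c')"
proof -
  have s0: "s > 0" using C n by (simp add: s_def)
  have sc: "s ^ (c' + 1) = n / C"
  proof -
    have "s ^ (c' + 1) = s powr real (c' + 1)" by (rule powr_realpow[symmetric, OF s0])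
    also have "\<dots> = n / C" unfolding s_def using C n by (simp add: powr_powr)
    finally show ?thesis .
  qed
  have Cs: "C * s ^ c' > 0" using C s0 by simp
  have "n / real t \<le> n / (C * s ^ c')"
    using t1 Cs n by (intro divide_left_mono) auto
  also have "\<dots> = s" using sc Cs C s0 by (simp add: field_simps)
  finally have r': "real r \<le> s + 1" using r by linarith
  let ?p = "1 / real c'"
  have p: "0 < ?p" "?p \<le> 1" using c by auto
  have "real t powr ?p \<le> (C * s ^ c') powr ?p + 1"
    by (rule powr_sub_le) (use t2 p Cs in auto)
  also have "(C * s ^ c') powr ?p = C powr ?p * s"
  proof -
    have "(s ^ c') powr ?p = s" using s0 c
      by (simp add: powr_realpow[symmetric] powr_powr)
    then show ?thesis using C s0 by (simp add: powr_mult)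
  qed
  finally have tp: "real t powr ?p \<le> C powr ?p * s + 1" .
  have D'0: "real c' / C powr ?p \<ge> 0" using C by auto
  have "(real c' / C powr ?p) * real t powr ?p \<le> (real c' / C powr ?p) * (C powr ?p * s + 1)"
    by (rule mult_left_mono[OF tp D'0])
  also have "\<dots> = real c' * s + real c' / C powr ?p" using C by (simp add: field_simps)
  finally have A: "(real c' / C powr ?p) * real t powr ?p \<le> real c' * s + real c' / C powr ?p" .
  have B: "(real (c' + 1) / C powr (1 / real (c' + 1))) * n powr (1 / real (c' + 1)) = real (c' + 1) * s"
    unfolding s_def using C n by (simp add: powr_divide)
  show ?thesis using A B r' by (simp add: algebra_simps)
qed



lemma set_split_first:
  assumes "i < m"
  shows "{j \<in> {i..<m}. P j} = (if P i then insert i {j \<in> {Suc i..<m}. P j} else {j \<in> {Suc i..<m}. P j})"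
proof -
  have "{i..<m} = insert i {Suc i..<m}" using assms by auto
  then show ?thesis by auto
qed

lemma cI_rec:
  assumes "i < m"
  shows "card {j \<in> {i..<m}. P j} = card {j \<in> {Suc i..<m}. P j} + (if P i then 1 else 0)"
  using set_split_first[OF assms, of P] by simp

lemma CI_rec:
  assumes "i < m"
  shows "(\<Prod>j\<in>{j \<in> {i..<m}. P j}. f j) = (\<Prod>j\<in>{j \<in> {Suc i..<m}. P j}. f j) * (if P i then f i else 1)"
  using set_split_first[OF assms, of P] by (simp add: mult.commute)

theorem proposition3p1:
  fixes G :: "('a, 'b) monoid_scheme"
    and H :: "nat \<Rightarrow> 'a set" and k :: "nat \<Rightarrow> enat" and m :: nat
  assumes "group G" and "finite (carrier G)" and "solvable G"
    and "H 0 = {\<one>\<^bsub>G\<^esub>}" and "H m = carrier G"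
    and "\<forall>i\<le>m. H i \<lhd> G"
    and "\<forall>i<m. H i \<subset> H (Suc i)"
    and "k 0 = \<infinity>"
    and "\<forall>i<m. H i = lcs_e G (H (Suc i)) (k i)"
    and "\<exists>i\<in>{1..<m}. k i = \<infinity>"
  defines "c \<equiv> card {i \<in> {1..<m}. k i = \<infinity>}"
    and "C \<equiv> (\<Prod>i\<in>{i \<in> {1..<m}. k i < \<infinity>}. the_enat (k i) + 1)"
  defines "D \<equiv> real c / (real C) powr (1 / real c)"
  shows "\<exists>K::real. \<forall>n::nat. n \<ge> 1 \<longrightarrow>
           (\<exists>g Q. g \<in> carrier G \<and> g \<noteq> \<one>\<^bsub>G\<^esub> \<and> is_program G n Q \<and>
              real (length Q) \<le> K * 2 powr (D * real n powr (1 / real c)) \<and>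
              (\<forall>\<sigma>. eval_program G \<sigma> Q = (if \<forall>i<n. \<sigma> i then g else \<one>\<^bsub>G\<^esub>)))"
proof -
  interpret group G by fact
  note fin = assms(2)
  have Hn: "\<And>i. i \<le> m \<Longrightarrow> H i \<lhd> G" using assms(6) by blast
  have Hk: "\<And>i. i < m \<Longrightarrow> H i = lcs_e G (H (Suc i)) (k i)" using assms(9) by blast
  define cI where "cI i = card {j \<in> {i..<m}. k j = \<infinity>}" for i
  define CI where "CI i = (\<Prod>j\<in>{j \<in> {i..<m}. k j < \<infinity>}. the_enat (k j) + 1)" for i
  define DI where "DI i = real (cI i) / real (CI i) powr (1 / real (cI i))" for i
  define Q where "Q i \<longleftrightarrow> (if cI i = 0 then (\<exists>K\<ge>0. GoodSet G (H i) {..<CI i} K)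
      else (\<exists>K\<ge>0. \<forall>n\<ge>1. GoodSet G (H i) {..<n} (K * 2 powr (DI i * real n powr (1 / real (cI i))))))" for i
  have CI_pos: "CI i \<ge> 1" for i unfolding CI_def by (rule prod_ge_1) auto
  have cI_rec: "cI i = cI (Suc i) + (if k i = \<infinity> then 1 else 0)" if "i < m" for i
    unfolding cI_def using cI_rec[OF that] .
  have CI_rec: "CI i = CI (Suc i) * (if k i < \<infinity> then the_enat (k i) + 1 else 1)" if "i < m" for i
    unfolding CI_def using CI_rec[OF that] .
  have Qm: "Q m"
  proof -
    have "cI m = 0" "CI m = 1" unfolding cI_def CI_def by auto
    moreover have "GoodSet G (H m) {..<1} 1"
      using GoodSet_base[of "H m" 0] assms(5) by (simp add: lessThan_Suc)
    ultimately have "\<exists>K\<ge>0. GoodSet G (H m) {..<CI m} K" by (intro exI[of _ "1::real"]) auto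
    then show ?thesis unfolding Q_def using \<open>cI m = 0\<close> by simp
  qed
  have step: "Q i" if i1: "1 \<le> i" and im: "i < m" and QS: "Q (Suc i)" for i
  proof -
    have HS: "H (Suc i) \<lhd> G" using Hn im by simp
    have Hi: "H i \<lhd> G" using Hn im by simp
    show ?thesis
    proof (cases "k i")
      case (enat kk)
      have Hi_eq: "H i = lcs G (H (Suc i)) kk" using Hk[OF im] enat by (simp add: lcs_e_def)
      have cIe: "cI i = cI (Suc i)" using cI_rec[OF im] enat by simp
      have CIe: "CI i = CI (Suc i) * (kk + 1)" using CI_rec[OF im] enat by simp
      show ?thesis
      proof (cases "cI (Suc i) = 0")
        case True
        then obtain K where K: "K \<ge> 0" "GoodSet G (H (Suc i)) {..<CI (Suc i)} K"
          using QS unfolding Q_def by auto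
        have "GoodSet G (H i) {..<(kk + 1) * CI (Suc i)} (4 ^ kk * K)"
          unfolding Hi_eq by (rule GoodSet_lcs[OF HS K(2) K(1)])
        moreover have "4 ^ kk * K \<ge> 0" using K by simp
        ultimately show ?thesis unfolding Q_def using True cIe CIe by (auto simp: mult.commute)
      next
        case False
        define c' where "c' = cI (Suc i)"
        have c'1: "c' \<ge> 1" using False c'_def by simp
        obtain K where K: "K \<ge> 0" "\<And>n. n \<ge> 1 \<Longrightarrow> GoodSet G (H (Suc i)) {..<n} (K * 2 powr (DI (Suc i) * real n powr (1 / real c')))"
          using QS False unfolding Q_def c'_def by auto
        define K' where "K' = 4 ^ kk * K * 2 powr (DI (Suc i))"
        have K'0: "K' \<ge> 0" using K by (simp add: K'_def)
        have "GoodSet G (H i) {..<n} (K' * 2 powr (DI i * real n powr (1 / real (cI i))))" if n1: "n \<ge> 1" for n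
        proof -
          define t where "t = (n + kk) div (kk + 1)"
          have "0 < t" unfolding t_def using n1 by (simp add: div_greater_zero_iff)
          then have t1: "t \<ge> 1" by simp
          have tn: "n \<le> (kk + 1) * t"
          proof -
            have e: "(n + kk) div (kk + 1) * (kk + 1) + (n + kk) mod (kk + 1) = n + kk"
              by (rule div_mult_mod_eq)
            have "(n + kk) mod (kk + 1) < kk + 1" by (rule mod_less_divisor) simp
            with e have "n \<le> (n + kk) div (kk + 1) * (kk + 1)" by linarith
            then show ?thesis unfolding t_def by (simp add: mult.commute)
          qed
          have treal: "real t \<le> real n / real (kk + 1) + 1"
          proof -
            have "t * (kk + 1) \<le> n + kk" unfolding t_def by (rule div_times_less_eq_dividend)
            then have "real t * real (kk + 1) \<le> real n + real kk" by (metis of_nat_add of_nat_le_iff of_nat_mult)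
            then show ?thesis by (simp add: field_simps)
          qed
          let ?L = "K * 2 powr (DI (Suc i) * real t powr (1 / real c'))"
          have "GoodSet G (H i) {..<(kk + 1) * t} (4 ^ kk * ?L)"
            unfolding Hi_eq by (rule GoodSet_lcs[OF HS K(2)[OF t1]]) (use K in simp)
          then have G1: "GoodSet G (H i) {..<n} (4 ^ kk * ?L)"
            by (rule GoodSet_shrink) (use n1 tn in auto)
          have DIS: "DI (Suc i) = real c' / real (CI (Suc i)) powr (1 / real c')" unfolding DI_def c'_def ..
          have DIi: "DI i = real c' / (real (CI (Suc i)) * real (kk + 1)) powr (1 / real c')"
            unfolding DI_def cIe CIe c'_def by (simp only: of_nat_mult)
          have ex: "DI (Suc i) * real t powr (1 / real c') \<le> DI i * real n powr (1 / real c') + DI (Suc i)"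
            unfolding DIS DIi by (rule Rb) (use c'1 CI_pos[of "Suc i"] treal in auto)
          have "4 ^ kk * ?L \<le> 4 ^ kk * K * 2 powr (DI i * real n powr (1 / real c') + DI (Suc i))"
            using ex K by (simp add: mult_left_mono)
          also have "\<dots> = K' * 2 powr (DI i * real n powr (1 / real (cI i)))"
            unfolding K'_def cIe c'_def by (simp add: powr_add)
          finally show ?thesis using GoodSet_mono[OF G1] by blast
        qed
        then show ?thesis unfolding Q_def using K'0 False cIe by auto
      qed
    next
      case infinity
      have fixH: "comm_subgroup G (H i) (H (Suc i)) = H i"
        using Hk[OF im] infinity nil_res_fix[OF fin HS] by (simp add: lcs_e_def)
      have cIe: "cI i = cI (Suc i) + 1" using cI_rec[OF im] infinity by simp
      have CIe: "CI i = CI (Suc i)" using CI_rec[OF im] infinity by simp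
      show ?thesis
      proof (cases "cI (Suc i) = 0")
        case True
        define Cs where "Cs = CI (Suc i)"
        have Cs1: "Cs \<ge> 1" using CI_pos Cs_def by simp
        obtain K where K: "K \<ge> 0" "GoodSet G (H (Suc i)) {..<Cs} K"
          using QS True unfolding Q_def Cs_def by auto
        have GI: "GoodSet G (H i) {..<1 + r * Cs} (2 ^ r * (1 + 2 * K) - 2 * K)" for r
          by (rule GoodSet_inf[OF Hi HS fixH K(2)])
        define K' where "K' = 2 * (1 + 2 * K)"
        have "GoodSet G (H i) {..<n} (K' * 2 powr (DI i * real n powr (1 / real (cI i))))" if n1: "n \<ge> 1" for n
        proof -
          define r where "r = n div Cs + 1"
          have rn: "n \<le> 1 + r * Cs"
          proof -
            have e: "n div Cs * Cs + n mod Cs = n" by (rule div_mult_mod_eq)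
            have "n mod Cs < Cs" using Cs1 by simp
            with e have "n \<le> n div Cs * Cs + Cs" by linarith
            then show ?thesis unfolding r_def by (simp add: algebra_simps)
          qed
          have G1: "GoodSet G (H i) {..<n} (2 ^ r * (1 + 2 * K) - 2 * K)"
            by (rule GoodSet_shrink[OF GI]) (use n1 rn in auto)
          have "(2::real) ^ r * (1 + 2 * K) - 2 * K \<le> 2 powr real r * (1 + 2 * K)"
            using K by (simp add: powr_realpow)
          also have "\<dots> \<le> 2 * 2 powr (real n / real Cs) * (1 + 2 * K)"
            using Rc[OF Cs1, of n] K unfolding r_def by (intro mult_right_mono) auto
          also have "\<dots> = K' * 2 powr (DI i * real n powr (1 / real (cI i)))"
            unfolding K'_def DI_def cIe True CIe Cs_def using n1 by simp
          finally show ?thesis using GoodSet_mono[OF G1] by blast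
        qed
        moreover have "K' \<ge> 0" using K by (simp add: K'_def)
        ultimately show ?thesis unfolding Q_def using cIe by auto
      next
        case False
        define c' where "c' = cI (Suc i)"
        have c'1: "c' \<ge> 1" using False c'_def by simp
        define Cs where "Cs = CI (Suc i)"
        have Cs1: "Cs \<ge> 1" using CI_pos Cs_def by simp
        obtain K where K: "K \<ge> 0" "\<And>n. n \<ge> 1 \<Longrightarrow> GoodSet G (H (Suc i)) {..<n} (K * 2 powr (DI (Suc i) * real n powr (1 / real c')))"
          using QS False unfolding Q_def c'_def by auto
        define K' where "K' = (1 + 2 * K) * 2 powr (1 + DI (Suc i))"
        have "GoodSet G (H i) {..<n} (K' * 2 powr (DI i * real n powr (1 / real (cI i))))" if n1: "n \<ge> 1" for n
        proof -
          define s where "s = (real n / real Cs) powr (1 / real (c' + 1))"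
          have s0: "s > 0" using n1 Cs1 by (simp add: s_def)
          define t where "t = nat \<lceil>real Cs * s ^ c'\<rceil>"
          have Cs0: "real Cs * s ^ c' > 0" using s0 Cs1 by simp
          have t1: "real Cs * s ^ c' \<le> real t" unfolding t_def by linarith
          have t2: "real t \<le> real Cs * s ^ c' + 1" unfolding t_def using Cs0 by linarith
          have tpos: "t \<ge> 1" using t1 Cs0 by (metis less_le_trans not_less of_nat_0 less_one)
          define r where "r = n div t + 1"
          have rn: "n \<le> 1 + r * t"
          proof -
            have e: "n div t * t + n mod t = n" by (rule div_mult_mod_eq)
            have "n mod t < t" using tpos by simp
            with e have "n \<le> n div t * t + t" by linarith
            then show ?thesis unfolding r_def by (simp add: algebra_simps)
          qed
          have rr: "real r \<le> real n / real t + 1"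
          proof -
            have "n div t * t \<le> n" by (rule div_times_less_eq_dividend)
            then have "real (n div t) * real t \<le> real n" by (metis of_nat_le_iff of_nat_mult)
            then have "real (n div t) \<le> real n / real t" using tpos by (simp add: field_simps)
            then show ?thesis unfolding r_def by simp
          qed
          define Lb where "Lb = K * 2 powr (DI (Suc i) * real t powr (1 / real c'))"
          have Lb0: "Lb \<ge> 0" using K by (simp add: Lb_def)
          have GI: "GoodSet G (H i) {..<1 + r * t} (2 ^ r * (1 + 2 * Lb) - 2 * Lb)"
            by (rule GoodSet_inf[OF Hi HS fixH K(2)[OF tpos, folded Lb_def]])
          have G1: "GoodSet G (H i) {..<n} (2 ^ r * (1 + 2 * Lb) - 2 * Lb)"
            by (rule GoodSet_shrink[OF GI]) (use n1 rn in auto)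
          have DIS: "DI (Suc i) = real c' / real Cs powr (1 / real c')" unfolding DI_def c'_def Cs_def ..
          have DIi: "DI i = real (c' + 1) / real Cs powr (1 / real (c' + 1))"
            unfolding DI_def cIe CIe c'_def Cs_def ..
          have ex: "real r + DI (Suc i) * real t powr (1 / real c')
              \<le> DI i * real n powr (1 / real (c' + 1)) + 1 + DI (Suc i)"
            unfolding DIS DIi
            by (rule Rd[OF c'1 _ _ s_def t1 t2 rr]) (use Cs1 n1 in auto)
          have e1: "1 \<le> (2::real) powr (DI (Suc i) * real t powr (1 / real c'))"
            using DIS Cs1 by (intro ge_one_powr_ge_zero) auto
          have "(2::real) ^ r * (1 + 2 * Lb) - 2 * Lb \<le> 2 ^ r * (1 + 2 * Lb)" using Lb0 by simp
          also have "\<dots> \<le> 2 ^ r * ((1 + 2 * K) * 2 powr (DI (Suc i) * real t powr (1 / real c')))"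
            unfolding Lb_def using e1 K by (intro mult_left_mono) (auto simp: algebra_simps)
          also have "\<dots> = (1 + 2 * K) * 2 powr (real r + DI (Suc i) * real t powr (1 / real c'))"
            by (simp add: powr_add powr_realpow)
          also have "\<dots> \<le> (1 + 2 * K) * 2 powr (DI i * real n powr (1 / real (c' + 1)) + 1 + DI (Suc i))"
            using ex K by (intro mult_left_mono powr_mono) auto
          also have "\<dots> = K' * 2 powr (DI i * real n powr (1 / real (cI i)))"
            unfolding K'_def cIe c'_def by (simp add: powr_add)
          finally show ?thesis using GoodSet_mono[OF G1] by blast
        qed
        moreover have "K' \<ge> 0" using K by (simp add: K'_def)
        ultimately show ?thesis unfolding Q_def using cIe by auto
      qed
    qed
  qed
  have allQ: "Q (m - d)" if "d \<le> m - 1" for d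
    using that
  proof (induction d)
    case 0 then show ?case using Qm by simp
  next
    case (Suc d)
    have e: "Suc (m - Suc d) = m - d" using Suc.prems by simp
    have "Q (Suc (m - Suc d))" using Suc e by simp
    then show ?case by (rule step[rotated 2]) (use Suc.prems in auto)
  qed
  have m1: "m \<ge> 1" using assms(10) by auto
  have Q1: "Q 1" using allQ[of "m - 1"] m1 by simp
  have cc: "cI 1 = c" "CI 1 = C" "DI 1 = D" unfolding cI_def CI_def DI_def c_def C_def D_def by simp_all
  have c1: "c \<ge> 1"
  proof -
    have "{i \<in> {1..<m}. k i = \<infinity>} \<noteq> {}" using assms(10) by auto
    then show ?thesis unfolding c_def by (simp add: Suc_le_eq card_gt_0_iff)
  qed
  obtain K where K: "K \<ge> 0" "\<And>n. n \<ge> 1 \<Longrightarrow> GoodSet G (H 1) {..<n} (K * 2 powr (D * real n powr (1 / real c)))"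
    using Q1 c1 unfolding Q_def cc by auto
  have H1n: "H 1 \<noteq> {\<one>\<^bsub>G\<^esub>}" using assms(4) assms(7) m1 by force
  have H1s: "subgroup (H 1) G" using Hn[of 1] m1 normal_imp_subgroup by blast
  show ?thesis
  proof (rule exI[of _ K], intro allI impI)
    fix n :: nat assume n1: "n \<ge> 1"
    obtain g where g: "g \<in> H 1" "g \<noteq> \<one>\<^bsub>G\<^esub>" "Comp G {..<n} (K * 2 powr (D * real n powr (1 / real c))) g"
      using GoodSet_nontriv[OF K(2)[OF n1] H1n H1s] by blast
    obtain P where P: "real (length P) \<le> K * 2 powr (D * real n powr (1 / real c))" "prog_ok G {..<n} P"
      "\<And>\<sigma>. eval_program G \<sigma> P = (if \<forall>j\<in>{..<n}. \<sigma> j then g else \<one>\<^bsub>G\<^esub>)"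
      using g(3) unfolding Comp_def by blast
    have "is_program G n P" using P(2) unfolding is_program_def prog_ok_def by auto
    moreover have "g \<in> carrier G" using g(1) H1s subgroup.subset by blast
    ultimately show "\<exists>g Q. g \<in> carrier G \<and> g \<noteq> \<one>\<^bsub>G\<^esub> \<and> is_program G n Q \<and>
              real (length Q) \<le> K * 2 powr (D * real n powr (1 / real c)) \<and>
              (\<forall>\<sigma>. eval_program G \<sigma> Q = (if \<forall>i<n. \<sigma> i then g else \<one>\<^bsub>G\<^esub>))"
      using g(2) P(1,3) by (intro exI[of _ g] exI[of _ P]) auto
  qed
qed


end
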